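(* $R(B_2,B_8) = 21$.
   Context: For graphs $G,H$, the Ramsey number $R(G,H)$ is the smallest integer $N$ such that every red/blue coloring of the edges of $K_N$ contains a red copy of $G$ (as a subgraph, not necessarily induced) or a blue copy of $H$. The book $B_k$ is the graph on $k+2$ vertices consisting of an edge $uv$ together with $k$ further vertices, each adjacent exactly to $u$ and $v$. *)

theory Defs
  imports Main
begin

type_synonym graph = "nat set \<times> nat set set"

definition simple_graph :: "graph \<Rightarrow> bool" where
  "simple_graph G \<longleftrightarrow> finite (fst G) \<and>
     (\<forall>e\<in>snd G. e \<subseteq> fst G \<and> card e = 2)"

definition book :: "nat \<Rightarrow> graph" where
  "book k = ({0..<k+2},
             {{0,1}} \<union> {{0,i} | i. 2 \<le> i \<and> i < k+2} \<union> {{1,i} | i. 2 \<le> i \<and> i < k+2})"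

text \<open>A red/blue colouring of the edges of K_N (vertex set {0..<N}) is a predicate
  col on 2-element sets: col e = True means e is red, False means e is blue.\<close>
definition has_copy :: "graph \<Rightarrow> nat \<Rightarrow> (nat set \<Rightarrow> bool) \<Rightarrow> bool" where
  "has_copy G N col \<longleftrightarrow>
     (\<exists>f. inj_on f (fst G) \<and> f ` fst G \<subseteq> {0..<N} \<and> (\<forall>e\<in>snd G. col (f ` e)))"

definition ramsey_prop :: "graph \<Rightarrow> graph \<Rightarrow> nat \<Rightarrow> bool" where
  "ramsey_prop G H N \<longleftrightarrow>
     (\<forall>col :: nat set \<Rightarrow> bool. has_copy G N col \<or> has_copy H N (\<lambda>e. \<not> col e))"

definition ramsey_number :: "graph \<Rightarrow> graph \<Rightarrow> nat" where
  "ramsey_number G H = (LEAST N. ramsey_prop G H N)"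

end

theory Submission
  imports Defs
begin

lemma card_filter_int: "finite A \<Longrightarrow> int (card {x\<in>A. P x}) = (\<Sum>x\<in>A. if P x then 1 else 0)"
  by (simp add: sum.inter_filter[symmetric])

lemma even_sym_sum:
  fixes f :: "'a \<Rightarrow> 'a \<Rightarrow> int"
  assumes "finite A" "\<And>x y. f x y = f y x" "\<And>x. f x x = 0"
  shows "even (\<Sum>x\<in>A. \<Sum>y\<in>A. f x y)"
  using assms(1)
proof (induction A rule: finite_induct)
  case empty then show ?case by simp
next
  case (insert a A)
  have "(\<Sum>x\<in>insert a A. \<Sum>y\<in>insert a A. f x y) =
        (\<Sum>x\<in>A. \<Sum>y\<in>A. f x y) + 2 * (\<Sum>y\<in>A. f a y)"
    using insert.hyps assms(2,3)
    by (simp add: sum.distrib algebra_simps)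
  then show ?case using insert.IH by simp
qed

definition VV :: "nat set" where "VV = {0..<21}"

lemma finVV[simp]: "finite VV" by (simp add: VV_def)
lemma cardVV: "card VV = 21" by (simp add: VV_def)

locale G21 =
  fixes R :: "nat \<Rightarrow> nat \<Rightarrow> bool"
  assumes symR: "R u v \<Longrightarrow> R v u"
  and irrR: "\<not> R v v"
  and condA: "u \<in> VV \<Longrightarrow> v \<in> VV \<Longrightarrow> R u v \<Longrightarrow> card {w\<in>VV. R u w \<and> R v w} \<le> 1"
  and condB: "u \<in> VV \<Longrightarrow> v \<in> VV \<Longrightarrow> u \<noteq> v \<Longrightarrow> \<not> R u v \<Longrightarrow>
      card {w\<in>VV. w\<noteq>u \<and> w\<noteq>v \<and> \<not>R u w \<and> \<not>R v w} \<le> 7"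
begin

definition NN where "NN v = {u\<in>VV. R v u}"
definition dg :: "nat \<Rightarrow> int" where "dg v = int (card (NN v))"
definition cg :: "nat \<Rightarrow> nat \<Rightarrow> int" where "cg u v = int (card {w\<in>VV. R u w \<and> R v w})"
definition ai :: "nat \<Rightarrow> nat \<Rightarrow> int" where "ai u v = (if R u v then 1 else 0)"
definition rr :: "nat \<Rightarrow> int" where "rr v = (\<Sum>u\<in>VV. if R v u then 1 - cg u v else 0)"
definition bb :: "nat \<Rightarrow> int" where
  "bb v = (\<Sum>u\<in>VV. if u \<noteq> v \<and> \<not> R v u then dg u + dg v - cg u v - 12 else 0)"
definition PP :: "nat \<Rightarrow> int" where "PP v = rr v + bb v + 3 * (dg v - 9)^2 - 3"

lemma R_iff: "R u v = R v u" using symR by blast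
lemma ai_sym: "ai u v = ai v u" by (simp add: ai_def R_iff)
lemma ai_diag[simp]: "ai v v = 0" by (simp add: ai_def irrR)
lemma cg_sym: "cg u v = cg v u" by (simp add: cg_def conj_commute)
lemma finNN[simp]: "finite (NN v)" by (simp add: NN_def)

lemma dg_sum: "dg v = (\<Sum>u\<in>VV. ai v u)"
  unfolding dg_def NN_def ai_def by (simp add: card_filter_int)
lemma cg_sum: "cg u v = (\<Sum>w\<in>VV. ai u w * ai v w)"
  unfolding cg_def card_filter_int[OF finVV] ai_def by (rule sum.cong) auto
lemma cg_diag: "cg v v = dg v"
  unfolding cg_def dg_def NN_def by simp
lemma cg_NN: "cg u v = int (card (NN u \<inter> NN v))"
  unfolding cg_def NN_def by (simp add: Collect_conj_eq[symmetric] Int_def conj_commute) (metis (no_types, lifting) Collect_cong)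

lemma dg_nonneg: "dg v \<ge> 0" by (simp add: dg_def)
lemma dg_le: "dg v \<le> 21"
proof -
  have "card (NN v) \<le> card VV" by (rule card_mono) (auto simp: NN_def)
  then show ?thesis by (simp add: dg_def cardVV)
qed

lemma cgA: "u \<in> VV \<Longrightarrow> v \<in> VV \<Longrightarrow> R u v \<Longrightarrow> cg u v \<le> 1"
  using condA by (simp add: cg_def)

lemma cgB: assumes "u \<in> VV" "v \<in> VV" "u \<noteq> v" "\<not> R u v"
  shows "dg u + dg v - cg u v \<ge> 12"
proof -
  let ?C = "{w\<in>VV. w\<noteq>u \<and> w\<noteq>v \<and> \<not>R u w \<and> \<not>R v w}"
  have eq: "?C = (VV - {u,v}) - (NN u \<union> NN v)" by (auto simp: NN_def)
  have sub: "NN u \<union> NN v \<subseteq> VV - {u,v}" using assms irrR symR by (auto simp: NN_def)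
  have c1: "card (VV - {u,v}) = 19" using assms by (simp add: cardVV)
  have "card ?C = card (VV - {u,v}) - card (NN u \<union> NN v)"
    unfolding eq using sub by (intro card_Diff_subset) auto
  moreover have "card (NN u \<union> NN v) + card (NN u \<inter> NN v) = card (NN u) + card (NN v)"
    using card_Un_Int[of "NN u" "NN v"] by simp
  moreover have "card (NN u \<union> NN v) \<le> 19" using card_mono[OF _ sub] c1 by simp
  ultimately show ?thesis using condB[OF assms] c1 by (simp add: dg_def cg_NN)
qed

end

context G21 begin

definition BB where "BB v = {u\<in>VV. u \<noteq> v \<and> \<not> R v u}"

lemma cardBB: assumes "v \<in> VV" shows "int (card (BB v)) = 20 - dg v"
proof -
  have e: "BB v = (VV - {v}) - NN v" by (auto simp: BB_def NN_def)
  have s: "NN v \<subseteq> VV - {v}" using irrR by (auto simp: NN_def)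
  have "card (BB v) = card (VV - {v}) - card (NN v)" unfolding e using s by (intro card_Diff_subset) auto
  moreover have "card (VV - {v}) = 20" using assms by (simp add: cardVV)
  moreover have "card (NN v) \<le> 20" using card_mono[OF _ s] \<open>card (VV - {v}) = 20\<close> by simp
  ultimately show ?thesis by (simp add: dg_def)
qed

lemma rrbb_v: assumes v: "v \<in> VV"
  shows "rr v + bb v = 33 * dg v + (\<Sum>u\<in>VV. dg u) - 240 - dg v * dg v
          - (\<Sum>u\<in>VV. ai v u * dg u) - (\<Sum>u\<in>VV. cg u v)"
proof -
  have "rr v + bb v = (\<Sum>u\<in>VV. ai v u + dg u + dg v - 12 - ai v u * dg u - ai v u * dg v
        + 12 * ai v u - (if u = v then 2 * dg v - 12 else 0) - cg u v + (if u = v then dg v else 0))"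
    unfolding rr_def bb_def sum.distrib[symmetric]
    by (rule sum.cong) (auto simp: ai_def irrR cg_diag)
  also have "\<dots> = (\<Sum>u\<in>VV. ai v u) + (\<Sum>u\<in>VV. dg u) + 21 * dg v - 21 * 12 - (\<Sum>u\<in>VV. ai v u * dg u)
        - (\<Sum>u\<in>VV. ai v u * dg v) + 12 * (\<Sum>u\<in>VV. ai v u) - (2 * dg v - 12) - (\<Sum>u\<in>VV. cg u v) + dg v"
    apply (simp only: sum.distrib sum_subtractf)
    using v by (simp add: sum_distrib_left[symmetric] cardVV)
  also have "(\<Sum>u\<in>VV. ai v u * dg v) = dg v * dg v"
    by (simp add: sum_distrib_right[symmetric] dg_sum)
  finally show ?thesis by (simp add: dg_sum[symmetric])
qed

lemma sumX: "(\<Sum>v\<in>VV. \<Sum>u\<in>VV. ai v u * dg u) = (\<Sum>u\<in>VV. dg u * dg u)"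
proof -
  have "(\<Sum>v\<in>VV. \<Sum>u\<in>VV. ai v u * dg u) = (\<Sum>u\<in>VV. \<Sum>v\<in>VV. ai u v * dg u)"
    by (subst sum.swap) (simp add: ai_sym)
  also have "\<dots> = (\<Sum>u\<in>VV. dg u * dg u)"
    by (simp add: sum_distrib_right[symmetric] dg_sum[symmetric])
  finally show ?thesis .
qed

lemma sumY: "(\<Sum>v\<in>VV. \<Sum>u\<in>VV. cg u v) = (\<Sum>w\<in>VV. dg w * dg w)"
proof -
  have "(\<Sum>v\<in>VV. \<Sum>u\<in>VV. cg u v) = (\<Sum>v\<in>VV. \<Sum>u\<in>VV. \<Sum>w\<in>VV. ai w u * ai w v)"
    by (simp add: cg_sum ai_sym)
  also have "\<dots> = (\<Sum>v\<in>VV. \<Sum>w\<in>VV. \<Sum>u\<in>VV. ai w u * ai w v)"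
    by (rule sum.cong[OF refl], rule sum.swap)
  also have "\<dots> = (\<Sum>w\<in>VV. \<Sum>v\<in>VV. \<Sum>u\<in>VV. ai w u * ai w v)"
    by (rule sum.swap)
  also have "\<dots> = (\<Sum>w\<in>VV. dg w * dg w)"
    by (simp add: sum_distrib_right[symmetric] sum_distrib_left[symmetric] dg_sum[symmetric])
  finally show ?thesis .
qed

lemma sumPP: "(\<Sum>v\<in>VV. PP v) = 0"
proof -
  have "(\<Sum>v\<in>VV. rr v + bb v) = (\<Sum>v\<in>VV. 33 * dg v + (\<Sum>u\<in>VV. dg u) - 240 - dg v * dg v
          - (\<Sum>u\<in>VV. ai v u * dg u) - (\<Sum>u\<in>VV. cg u v))"
    by (rule sum.cong) (simp_all add: rrbb_v)
  also have "\<dots> = 54 * (\<Sum>u\<in>VV. dg u) - 5040 - 3 * (\<Sum>w\<in>VV. dg w * dg w)"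
    by (simp add: sum_subtractf sum.distrib sum_distrib_left[symmetric] sumX sumY cardVV)
  finally have e: "(\<Sum>v\<in>VV. rr v + bb v) = 54 * (\<Sum>u\<in>VV. dg u) - 5040 - 3 * (\<Sum>w\<in>VV. dg w * dg w)" .
  have "(\<Sum>v\<in>VV. PP v) = (\<Sum>v\<in>VV. rr v + bb v) + (\<Sum>v\<in>VV. 3 * dg v * dg v - 54 * dg v + 240)"
    unfolding PP_def sum.distrib[symmetric] by (rule sum.cong) (simp_all add: power2_eq_square algebra_simps)
  also have "(\<Sum>v\<in>VV. 3 * dg v * dg v - 54 * dg v + 240) = 3 * (\<Sum>w\<in>VV. dg w * dg w) - 54 * (\<Sum>u\<in>VV. dg u) + 5040"
    by (simp add: sum_subtractf sum.distrib sum_distrib_left[symmetric] cardVV mult.assoc)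
  finally show ?thesis using e by simp
qed

end

context G21 begin

definition ZZ where "ZZ v = {u\<in>VV. R v u \<and> cg u v = 0}"
definition MM where "MM v = {u\<in>VV. R v u \<and> cg u v = 1}"

lemma cg_nonneg: "cg u v \<ge> 0" by (simp add: cg_def)

lemma cg01: "u \<in> VV \<Longrightarrow> v \<in> VV \<Longrightarrow> R v u \<Longrightarrow> cg u v = 0 \<or> cg u v = 1"
  using cgA[of u v] cg_nonneg[of u v] symR by fastforce

lemma rr_card: assumes "v \<in> VV" shows "rr v = int (card (ZZ v))"
proof -
  have "rr v = (\<Sum>u\<in>VV. if R v u \<and> cg u v = 0 then 1 else 0)"
    unfolding rr_def by (rule sum.cong) (use cg01 assms in auto)
  then show ?thesis unfolding ZZ_def by (simp add: card_filter_int)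
qed

lemma rr_nonneg: "v \<in> VV \<Longrightarrow> rr v \<ge> 0" by (simp add: rr_card)

lemma NN_split: assumes "v \<in> VV" shows "NN v = MM v \<union> ZZ v" "MM v \<inter> ZZ v = {}"
  using cg01 assms by (auto simp: NN_def MM_def ZZ_def)

lemma card_NN_split: "v \<in> VV \<Longrightarrow> card (NN v) = card (MM v) + card (ZZ v)"
  using NN_split[of v] by (simp add: card_Un_disjoint MM_def ZZ_def)

lemma bb_term_nonneg: "v \<in> VV \<Longrightarrow> u \<in> VV \<Longrightarrow> u \<noteq> v \<Longrightarrow> \<not> R v u \<Longrightarrow> dg u + dg v - cg u v - 12 \<ge> 0"
  using cgB[of u v] symR by fastforce

lemma bb_nonneg: "v \<in> VV \<Longrightarrow> bb v \<ge> 0"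
  unfolding bb_def by (rule sum_nonneg) (use bb_term_nonneg in auto)

lemma rr_par: assumes "v \<in> VV" shows "even (dg v - rr v)"
proof -
  have "rr v = (\<Sum>u\<in>VV. ai v u - ai v u * cg u v)"
    unfolding rr_def by (rule sum.cong) (auto simp: ai_def)
  also have "\<dots> = dg v - (\<Sum>u\<in>VV. \<Sum>w\<in>VV. ai v u * ai u w * ai v w)"
    by (simp add: sum_subtractf dg_sum cg_sum sum_distrib_left mult.assoc)
  finally have "dg v - rr v = (\<Sum>u\<in>VV. \<Sum>w\<in>VV. ai v u * ai u w * ai v w)" by simp
  moreover have "even (\<Sum>u\<in>VV. \<Sum>w\<in>VV. ai v u * ai u w * ai v w)"
    by (rule even_sym_sum) (auto simp: ai_def dest: symR)
  ultimately show ?thesis by simp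
qed

lemma bb_par: assumes v: "v \<in> VV" shows "even (bb v - (20 - dg v) * (dg v - 12))"
proof -
  have "bb v = (\<Sum>u\<in>VV. (if u \<in> BB v then dg u - cg u v else 0) + (if u \<in> BB v then dg v - 12 else 0))"
    unfolding bb_def BB_def by (rule sum.cong) auto
  also have "\<dots> = (\<Sum>u\<in>VV. if u \<in> BB v then dg u - cg u v else 0) + int (card (BB v)) * (dg v - 12)"
    by (simp add: sum.distrib sum.inter_filter[symmetric] BB_def)
  also have "(\<Sum>u\<in>VV. if u \<in> BB v then dg u - cg u v else 0) = (\<Sum>u\<in>VV. (1 - ai v u) * (dg u - cg u v))"
    by (rule sum.cong) (auto simp: BB_def ai_def cg_diag)
  also have "\<dots> = (\<Sum>u\<in>VV. \<Sum>w\<in>VV. (1 - ai v u) * ai u w * (1 - ai v w))"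
  proof (rule sum.cong)
    fix u assume "u \<in> VV"
    have "dg u - cg u v = (\<Sum>w\<in>VV. ai u w * (1 - ai v w))"
      by (simp add: dg_sum cg_sum sum_subtractf algebra_simps)
    then show "(1 - ai v u) * (dg u - cg u v) = (\<Sum>w\<in>VV. (1 - ai v u) * ai u w * (1 - ai v w))"
      by (simp add: sum_distrib_left mult.assoc)
  qed simp
  finally have e: "bb v - (20 - dg v) * (dg v - 12) = (\<Sum>u\<in>VV. \<Sum>w\<in>VV. (1 - ai v u) * ai u w * (1 - ai v w))"
    using cardBB[OF v] by simp
  have "even (\<Sum>u\<in>VV. \<Sum>w\<in>VV. (1 - ai v u) * ai u w * (1 - ai v w))"
    by (rule even_sym_sum) (auto simp: ai_def dest: symR)
  then show ?thesis using e by simp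
qed

lemma odd_rr_bb: assumes "v \<in> VV" "odd (dg v)" shows "odd (rr v)" "odd (bb v)"
proof -
  show "odd (rr v)" using rr_par[OF assms(1)] assms(2) by auto
  have "odd ((20 - dg v) * (dg v - 12))" using assms(2) by auto
  then show "odd (bb v)" using bb_par[OF assms(1)] by auto
qed

end

context G21 begin

lemma cg_set: "cg u v = int (card {w\<in>VV. R u w \<and> R v w})" by (simp add: cg_def)

lemma common_le1:
  assumes "x \<in> VV" "y \<in> VV" "R x y" "a \<in> VV" "b \<in> VV" "R x a" "R y a" "R x b" "R y b"
  shows "a = b"
proof (rule ccontr)
  assume "a \<noteq> b"
  then have "card {a, b} = 2" by simp
  moreover have sub: "{a, b} \<subseteq> {w\<in>VV. R x w \<and> R y w}" using assms by auto
  moreover have "card {a, b} \<le> card {w\<in>VV. R x w \<and> R y w}"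
    by (rule card_mono[OF _ sub]) simp
  ultimately have "2 \<le> card {w\<in>VV. R x w \<and> R y w}" by simp
  with condA[OF assms(1-3)] show False by simp
qed

lemma MM_partner:
  assumes v: "v \<in> VV" and x: "x \<in> MM v"
  shows "\<exists>y. y \<in> VV \<and> R x y \<and> R v y"
proof -
  have "card {w\<in>VV. R x w \<and> R v w} = 1" using x by (simp add: MM_def cg_def)
  then obtain y where "{w\<in>VV. R x w \<and> R v w} = {y}" by (rule card_1_singletonE)
  then show ?thesis by blast
qed

definition pp where "pp v x = (THE y. y \<in> VV \<and> R x y \<and> R v y)"

lemma pp_prop:
  assumes v: "v \<in> VV" and x: "x \<in> MM v"
  shows "pp v x \<in> VV \<and> R x (pp v x) \<and> R v (pp v x)"
proof -
  obtain y where y: "y \<in> VV" "R x y" "R v y" using MM_partner[OF v x] by blast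
  have xv: "x \<in> VV" "R x v" using x symR by (auto simp: MM_def)
  have uniq: "\<And>z. z \<in> VV \<and> R x z \<and> R v z \<Longrightarrow> z = y"
  proof -
    fix z assume "z \<in> VV \<and> R x z \<and> R v z"
    then show "z = y" using common_le1[OF xv(1) v xv(2), of z y] y by simp
  qed
  have "pp v x = y" unfolding pp_def
    apply (rule the_equality)
     apply (simp add: y)
    apply (erule uniq)
    done
  then show ?thesis using y by simp
qed

lemma pp_uniq:
  assumes v: "v \<in> VV" and x: "x \<in> MM v" and z: "z \<in> VV" "R x z" "R v z"
  shows "z = pp v x"
proof -
  have xv: "x \<in> VV" "R x v" using x symR by (auto simp: MM_def)
  show ?thesis using common_le1[OF xv(1) v xv(2), of z "pp v x"] z pp_prop[OF v x] by simp
qed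

lemma pp_MM: assumes v: "v \<in> VV" and x: "x \<in> MM v" shows "pp v x \<in> MM v"
proof -
  let ?y = "pp v x"
  have y: "?y \<in> VV" "R x ?y" "R v ?y" using pp_prop[OF v x] by auto
  have xv: "x \<in> VV" "R v x" using x by (auto simp: MM_def)
  have "cg ?y v \<le> 1" using cgA[OF y(1) v] y symR by blast
  moreover have "cg ?y v \<ge> 1"
  proof -
    have sub: "{x} \<subseteq> {w\<in>VV. R ?y w \<and> R v w}" using xv y symR by auto
    have "card {x} \<le> card {w\<in>VV. R ?y w \<and> R v w}"
      by (rule card_mono[OF _ sub]) simp
    then have "1 \<le> card {w\<in>VV. R ?y w \<and> R v w}" by simp
    then show ?thesis by (simp add: cg_def)
  qed
  ultimately show ?thesis using y by (simp add: MM_def)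
qed

lemma pp_pp: assumes v: "v \<in> VV" and x: "x \<in> MM v" shows "pp v (pp v x) = x"
proof -
  have y: "pp v x \<in> MM v" using pp_MM[OF v x] .
  have xv: "x \<in> VV" "R v x" using x by (auto simp: MM_def)
  have "R (pp v x) x" using pp_prop[OF v x] symR by blast
  then show ?thesis using pp_uniq[OF v y xv(1)] xv by simp
qed

lemma pairing:
  assumes v: "v \<in> VV" and u: "u \<in> VV" "u \<noteq> v"
  shows "2 * card (NN u \<inter> MM v) \<le> card (MM v)"
proof -
  have inj: "inj_on (pp v) (NN u \<inter> MM v)"
    by (rule inj_onI) (metis IntE pp_pp v)
  have img: "pp v ` (NN u \<inter> MM v) \<subseteq> MM v - NN u"
  proof
    fix z assume "z \<in> pp v ` (NN u \<inter> MM v)"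
    then obtain x where x: "x \<in> NN u" "x \<in> MM v" and z: "z = pp v x" by blast
    have zM: "z \<in> MM v" using pp_MM[OF v x(2)] z by simp
    have p: "pp v x \<in> VV" "R x (pp v x)" "R v (pp v x)" using pp_prop[OF v x(2)] by auto
    have xv: "x \<in> VV" "R v x" "R u x" using x by (auto simp: MM_def NN_def)
    have "z \<notin> NN u"
    proof
      assume "z \<in> NN u"
      then have "R u z" by (simp add: NN_def)
      then have "u = v" using common_le1[OF xv(1) p(1) p(2) u(1) v] xv p z symR by simp
      with u show False by simp
    qed
    then show "z \<in> MM v - NN u" using zM by simp
  qed
  have fin: "finite (MM v - NN u)" by (simp add: MM_def)
  have "card (NN u \<inter> MM v) \<le> card (MM v - NN u)"
    using card_inj_on_le[OF inj img fin] .
  moreover have "card (MM v - NN u) = card (MM v) - card (MM v \<inter> NN u)"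
    by (rule card_Diff_subset_Int) (simp add: MM_def)
  moreover have "card (MM v \<inter> NN u) \<le> card (MM v)" by (rule card_mono) (auto simp: MM_def)
  ultimately show ?thesis by (simp add: Int_commute)
qed

lemma cg_decomp:
  assumes v: "v \<in> VV"
  shows "cg u v = int (card (NN u \<inter> MM v)) + int (card (NN u \<inter> ZZ v))"
proof -
  have "NN u \<inter> NN v = (NN u \<inter> MM v) \<union> (NN u \<inter> ZZ v)" using NN_split[OF v] by auto
  moreover have "(NN u \<inter> MM v) \<inter> (NN u \<inter> ZZ v) = {}" using NN_split[OF v] by auto
  ultimately show ?thesis unfolding cg_NN
    by (simp add: card_Un_disjoint MM_def ZZ_def NN_def)
qed

end

context G21 begin

lemma bb_BB: "bb v = (\<Sum>u\<in>BB v. dg u + dg v - cg u v - 12)"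
  unfolding bb_def BB_def by (simp add: sum.inter_filter)

lemma light:
  assumes v: "v \<in> VV" and d9: "dg v = 9" and r1: "rr v = 1" and b1: "bb v = 1"
  shows "\<exists>w. w \<in> VV \<and> R v w \<and> cg w v = 0 \<and> 11 \<le> dg w + int (card {u \<in> BB v. dg u \<le> 7})"
proof -
  have "card (ZZ v) = 1" using rr_card[OF v] r1 by simp
  then obtain w where Zw: "ZZ v = {w}" by (rule card_1_singletonE)
  then have w: "w \<in> VV" "R v w" "cg w v = 0" by (auto simp: ZZ_def)
  have cM: "card (MM v) = 8" using card_NN_split[OF v] d9 \<open>card (ZZ v) = 1\<close> by (simp add: dg_def)
  define e where "e u = dg u + dg v - cg u v - 12" for u
  have bbs: "(\<Sum>u\<in>BB v. e u) = 1" using b1 bb_BB by (simp add: e_def)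
  have enn: "\<And>u. u \<in> BB v \<Longrightarrow> e u \<ge> 0" unfolding e_def BB_def using bb_term_nonneg v by auto
  define E where "E = {u \<in> BB v. e u \<ge> 1}"
  have finBB: "finite (BB v)" by (simp add: BB_def)
  have cE: "card E \<le> 1"
  proof -
    have "int (card E) = (\<Sum>u\<in>E. 1)" by simp
    also have "\<dots> \<le> (\<Sum>u\<in>E. e u)" by (rule sum_mono) (simp add: E_def)
    also have "\<dots> \<le> (\<Sum>u\<in>BB v. e u)" by (rule sum_mono2[OF finBB]) (use enn in \<open>auto simp: E_def\<close>)
    finally show ?thesis using bbs by simp
  qed
  have key: "{u \<in> BB v. \<not> dg u \<le> 7} \<subseteq> E \<union> (NN w - {v})"
  proof
    fix u assume u: "u \<in> {u \<in> BB v. \<not> dg u \<le> 7}"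
    then have uB: "u \<in> BB v" and ud: "dg u \<ge> 8" by auto
    have uV: "u \<in> VV" "u \<noteq> v" using uB by (auto simp: BB_def)
    show "u \<in> E \<union> (NN w - {v})"
    proof (cases "u \<in> E")
      case True then show ?thesis by simp
    next
      case False
      then have "e u = 0" using enn[OF uB] uB by (auto simp: E_def)
      then have cgu: "cg u v = dg u - 3" using d9 by (simp add: e_def)
      have p: "2 * card (NN u \<inter> MM v) \<le> 8" using pairing[OF v uV] cM by simp
      have "cg u v = int (card (NN u \<inter> MM v)) + int (card (NN u \<inter> ZZ v))" by (rule cg_decomp[OF v])
      then have "card (NN u \<inter> ZZ v) \<noteq> 0" using p cgu ud by linarith
      then have "w \<in> NN u" using Zw by (cases "w \<in> NN u") auto
      then have "u \<in> NN w" using uV symR by (auto simp: NN_def)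
      then show ?thesis using uV by simp
    qed
  qed
  have vw: "v \<in> NN w" using v w symR by (auto simp: NN_def)
  have c2: "card (NN w - {v}) = card (NN w) - 1" using vw by simp
  have c3: "card (E \<union> (NN w - {v})) \<le> card E + card (NN w - {v})" by (rule card_Un_le)
  have c4: "card {u \<in> BB v. \<not> dg u \<le> 7} \<le> card (E \<union> (NN w - {v}))"
    by (rule card_mono[OF _ key]) (simp add: E_def finBB)
  have c5: "card (BB v) = card {u \<in> BB v. dg u \<le> 7} + card {u \<in> BB v. \<not> dg u \<le> 7}"
  proof -
    have "BB v = {u \<in> BB v. dg u \<le> 7} \<union> {u \<in> BB v. \<not> dg u \<le> 7}" by auto
    then show ?thesis using finBB by (metis (no_types, lifting) card_Un_disjoint disjoint_iff finite_Un mem_Collect_eq)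
  qed
  have c6: "int (card (BB v)) = 11" using cardBB[OF v] d9 by simp
  have "card (NN w) \<ge> 1" using vw by (metis One_nat_def Suc_leI card_gt_0_iff empty_iff finNN)
  then show ?thesis using w c2 c3 c4 c5 c6 cE by (auto simp: dg_def)
qed

lemma sq_ge: fixes t :: int assumes "\<bar>t\<bar> \<ge> k" "k \<ge> 0" shows "t^2 \<ge> k * k"
proof -
  have "k * k \<le> \<bar>t\<bar> * \<bar>t\<bar>" using mult_mono[OF assms(1) assms(1)] assms(2) by simp
  then show ?thesis by (metis abs_mult_self_eq power2_eq_square)
qed

lemma PP_cases:
  assumes v: "v \<in> VV"
  shows "(dg v = 9 \<and> rr v = 1 \<and> bb v = 1 \<and> PP v = -1)
       \<or> (dg v = 9 \<and> \<not>(rr v = 1 \<and> bb v = 1) \<and> PP v \<ge> 1)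
       \<or> ((dg v = 8 \<or> dg v = 10) \<and> PP v = rr v + bb v)
       \<or> (dg v \<notin> {8,9,10} \<and> PP v \<ge> 11 \<and> PP v \<ge> rr v + 9)"
proof -
  have rn: "rr v \<ge> 0" and bn: "bb v \<ge> 0" using rr_nonneg[OF v] bb_nonneg[OF v] by auto
  consider "dg v = 9" | "dg v = 8 \<or> dg v = 10" | "dg v \<notin> {8,9,10}" by auto
  then show ?thesis
  proof cases
    case 1
    then have o: "odd (rr v)" "odd (bb v)" using odd_rr_bb[OF v] by auto
    have r1: "rr v \<ge> 1" using o rn by (cases "rr v = 0") auto
    have b1: "bb v \<ge> 1" using o bn by (cases "bb v = 0") auto
    show ?thesis
    proof (cases "rr v = 1 \<and> bb v = 1")
      case True then show ?thesis using 1 by (simp add: PP_def)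
    next
      case False
      moreover have "rr v \<noteq> 2" using o by auto
      moreover have "bb v \<noteq> 2" using o by auto
      ultimately have "rr v + bb v \<ge> 4" using r1 b1 by (smt (verit))
      then have "PP v \<ge> 1" using 1 by (simp add: PP_def)
      then show ?thesis using 1 False by simp
    qed
  next
    case 2
    then have "(dg v - 9)^2 = 1" by auto
    then show ?thesis using 2 by (auto simp: PP_def)
  next
    case 3
    show ?thesis
    proof (cases "odd (dg v)")
      case True
      then have o: "odd (rr v)" "odd (bb v)" using odd_rr_bb[OF v] by auto
      have "rr v \<ge> 1" using o rn by (cases "rr v = 0") auto
      moreover have "bb v \<ge> 1" using o bn by (cases "bb v = 0") auto
      moreover have "\<bar>dg v - 9\<bar> \<ge> 2"
      proof (rule ccontr)
        assume "\<not> ?thesis"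
        then have "dg v \<in> {8,9,10}" by auto
        with 3 show False by simp
      qed
      then have "(dg v - 9)^2 \<ge> 4" using sq_ge[of 2 "dg v - 9"] by simp
      ultimately show ?thesis using 3 by (auto simp: PP_def)
    next
      case False
      have "\<bar>dg v - 9\<bar> \<ge> 3"
      proof (rule ccontr)
        assume "\<not> ?thesis"
        then have "dg v \<in> {7,8,9,10,11}" by auto
        with 3 False show False by auto
      qed
      then have "(dg v - 9)^2 \<ge> 9" using sq_ge[of 3 "dg v - 9"] by simp
      then show ?thesis using 3 rn bn by (auto simp: PP_def)
    qed
  qed
qed

end

context G21 begin

lemma reduce: "\<forall>v\<in>VV. (dg v = 8 \<or> dg v = 10) \<and> rr v = 0 \<and> bb v = 0"
proof -
  define H where "H = {v\<in>VV. dg v \<notin> {8,9,10}}"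
  define W where "W = {v\<in>VV. dg v = 9 \<and> rr v = 1 \<and> bb v = 1}"
  define D where "D = {v\<in>VV. dg v = 10}"
  have fH: "finite H" and fW: "finite W" and fD: "finite D" by (auto simp: H_def W_def D_def)
  have S0: "(\<Sum>v\<in>VV. PP v) = 0" by (rule sumPP)
  have PW: "\<And>v. v \<in> W \<Longrightarrow> PP v = -1" by (auto simp: W_def PP_def)
  have Pnn: "\<And>v. v \<in> VV \<Longrightarrow> v \<notin> W \<Longrightarrow> PP v \<ge> 0"
  proof -
    fix v assume "v \<in> VV" "v \<notin> W"
    then show "PP v \<ge> 0" using PP_cases[of v] rr_nonneg[of v] bb_nonneg[of v] by (auto simp: W_def)
  qed
  have PH: "\<And>v. v \<in> H \<Longrightarrow> PP v \<ge> 11 \<and> PP v \<ge> rr v + 9"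
    using PP_cases by (fastforce simp: H_def)
  have PD: "\<And>v. v \<in> D \<Longrightarrow> PP v \<ge> rr v"
    using PP_cases bb_nonneg by (fastforce simp: D_def)
  have WV: "W \<subseteq> VV" and HV: "H \<subseteq> VV" and DV: "D \<subseteq> VV" by (auto simp: W_def H_def D_def)
  have WH: "W \<inter> H = {}" and WD: "W \<inter> D = {}" and DH: "D \<inter> H = {}" by (auto simp: W_def H_def D_def)
  have split1: "(\<Sum>v\<in>VV. PP v) = (\<Sum>v\<in>W. PP v) + (\<Sum>v\<in>VV - W. PP v)"
    using WV by (metis add.commute finVV sum.subset_diff)
  have sW: "(\<Sum>v\<in>W. PP v) = - int (card W)" using PW by simp
  have cH: "card H \<le> 1"
  proof (rule ccontr)
    assume "\<not> ?thesis"
    have "(\<Sum>v\<in>H. PP v) \<le> (\<Sum>v\<in>VV - W. PP v)"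
      by (rule sum_mono2) (use HV WH Pnn in auto)
    moreover have "(\<Sum>v\<in>H. (11::int)) \<le> (\<Sum>v\<in>H. PP v)" by (rule sum_mono) (use PH in auto)
    moreover have "card W + card H \<le> 21"
    proof -
      have "card (W \<union> H) \<le> card VV" by (rule card_mono) (use WV HV in auto)
      then show ?thesis using card_Un_disjoint[OF fW fH WH] cardVV by simp
    qed
    ultimately show False using S0 split1 sW \<open>\<not> card H \<le> 1\<close> by simp
  qed
  have Wcov: "\<And>v. v \<in> W \<Longrightarrow> \<exists>a\<in>D \<union> H. v \<in> ZZ a \<and> H \<noteq> {}"
  proof -
    fix v assume vW: "v \<in> W"
    then have v: "v \<in> VV" "dg v = 9" "rr v = 1" "bb v = 1" by (auto simp: W_def)
    obtain w where w: "w \<in> VV" "R v w" "cg w v = 0" and c: "11 \<le> dg w + int (card {u \<in> BB v. dg u \<le> 7})"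
      using light[OF v] by blast
    have "{u \<in> BB v. dg u \<le> 7} \<subseteq> H" by (auto simp: BB_def H_def)
    then have "card {u \<in> BB v. dg u \<le> 7} \<le> card H" by (rule card_mono[OF fH])
    then have c2: "11 \<le> dg w + int (card H)" using c by simp
    have vZ: "v \<in> ZZ w" using v w symR cg_sym by (auto simp: ZZ_def)
    have "dg w \<le> 20 \<or> True" by simp
    show "\<exists>a\<in>D \<union> H. v \<in> ZZ a \<and> H \<noteq> {}"
    proof (cases "dg w \<ge> 11")
      case True
      then have "w \<in> H" using w by (auto simp: H_def)
      then show ?thesis using vZ by blast
    next
      case False
      then have "dg w = 10" "card H = 1" using c2 cH by auto
      then show ?thesis using vZ w by (auto simp: D_def)
    qed
  qed
  have cW: "int (card W) \<le> (\<Sum>a\<in>D \<union> H. rr a)"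
  proof -
    have "W \<subseteq> (\<Union>a\<in>D \<union> H. ZZ a)" using Wcov by blast
    then have "card W \<le> card (\<Union>a\<in>D \<union> H. ZZ a)" by (rule card_mono[rotated]) (simp add: fD fH ZZ_def)
    also have "\<dots> \<le> (\<Sum>a\<in>D \<union> H. card (ZZ a))" by (rule card_UN_le) (simp add: fD fH)
    finally have cw: "card W \<le> (\<Sum>a\<in>D \<union> H. card (ZZ a))" .
    have "int (card W) \<le> int (\<Sum>a\<in>D \<union> H. card (ZZ a))" using cw by (simp only: of_nat_le_iff)
    also have "\<dots> = (\<Sum>a\<in>D \<union> H. int (card (ZZ a)))" by (rule of_nat_sum)
    also have "\<dots> = (\<Sum>a\<in>D \<union> H. rr a)" by (rule sum.cong) (use rr_card DV HV in auto)
    finally show ?thesis .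
  qed
  have Hempty: "H = {}"
  proof (rule ccontr)
    assume Hne: "H \<noteq> {}"
    have "(\<Sum>v\<in>VV - W. PP v) \<ge> (\<Sum>v\<in>D \<union> H. PP v)"
      by (rule sum_mono2) (use DV HV WD WH Pnn in auto)
    moreover have "(\<Sum>v\<in>D \<union> H. PP v) = (\<Sum>v\<in>D. PP v) + (\<Sum>v\<in>H. PP v)"
      by (rule sum.union_disjoint) (simp_all add: fD fH DH)
    moreover have "(\<Sum>v\<in>D. PP v) \<ge> (\<Sum>v\<in>D. rr v)" by (rule sum_mono) (use PD in auto)
    moreover have "(\<Sum>v\<in>H. PP v) \<ge> (\<Sum>v\<in>H. rr v + 9)" by (rule sum_mono) (use PH in auto)
    moreover have "(\<Sum>v\<in>H. rr v + 9) = (\<Sum>v\<in>H. rr v) + 9 * int (card H)" by (simp add: sum.distrib)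
    moreover have "(\<Sum>a\<in>D \<union> H. rr a) = (\<Sum>v\<in>D. rr v) + (\<Sum>v\<in>H. rr v)"
      by (rule sum.union_disjoint) (simp_all add: fD fH DH)
    moreover have "card H \<ge> 1" using Hne fH by (simp add: Suc_le_eq card_gt_0_iff)
    ultimately show False using S0 split1 sW cW by linarith
  qed
  have Wempty: "W = {}" using Wcov Hempty by blast
  have allnn: "\<forall>v\<in>VV. PP v \<ge> 0" using Pnn Wempty by blast
  have all0: "\<forall>v\<in>VV. PP v = 0" using sum_nonneg_eq_0_iff[OF finVV] allnn S0 by blast
  show ?thesis
  proof
    fix v assume v: "v \<in> VV"
    have "v \<notin> H" using Hempty by simp
    then have "dg v \<in> {8,9,10}" using v by (simp add: H_def)
    moreover have "v \<notin> W" using Wempty by simp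
    ultimately show "(dg v = 8 \<or> dg v = 10) \<and> rr v = 0 \<and> bb v = 0"
      using PP_cases[OF v] all0 v rr_nonneg[OF v] bb_nonneg[OF v] by (auto simp: W_def)
  qed
qed

end

fun orb :: "'a \<times> 'a \<times> 'a \<times> 'a \<times> 'a \<Rightarrow> ('a \<times> 'a \<times> 'a \<times> 'a \<times> 'a) set" where
  "orb (a,b,c,d,e) = {(a,b,c,d,e),(b,c,d,e,a),(c,d,e,a,b),(d,e,a,b,c),(e,a,b,c,d)}"

lemma orb_mem: "x \<in> orb t \<Longrightarrow> orb x = orb t"
proof -
  obtain a b c d e where t: "t = (a,b,c,d,e)" by (cases t) auto
  assume "x \<in> orb t"
  then have "x = (a,b,c,d,e) \<or> x = (b,c,d,e,a) \<or> x = (c,d,e,a,b) \<or> x = (d,e,a,b,c) \<or> x = (e,a,b,c,d)"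
    using t by simp
  then show ?thesis using t by (elim disjE) auto
qed

lemma orb_self: "t \<in> orb t" by (cases t) auto

lemma rot5_dvd:
  fixes S :: "('a \<times> 'a \<times> 'a \<times> 'a \<times> 'a) set"
  assumes fin: "finite S"
    and cl: "\<And>a b c d e. (a,b,c,d,e) \<in> S \<Longrightarrow> (b,c,d,e,a) \<in> S"
    and ne: "\<And>a b c d e. (a,b,c,d,e) \<in> S \<Longrightarrow> a \<noteq> b"
  shows "5 dvd card S"
proof -
  have sub: "orb t \<subseteq> S" if "t \<in> S" for t
  proof -
    obtain a b c d e where t: "t = (a,b,c,d,e)" by (cases t) auto
    have 1: "(b,c,d,e,a) \<in> S" using cl that t by simp
    have 2: "(c,d,e,a,b) \<in> S" using cl[OF 1] .
    have 3: "(d,e,a,b,c) \<in> S" using cl[OF 2] .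
    have 4: "(e,a,b,c,d) \<in> S" using cl[OF 3] .
    show ?thesis using that t 1 2 3 4 by simp
  qed
  have c5: "card (orb t) = 5" if "t \<in> S" for t
  proof -
    obtain a b c d e where t: "t = (a,b,c,d,e)" by (cases t) auto
    have s: "(a,b,c,d,e) \<in> S" using that t by simp
    have 1: "(b,c,d,e,a) \<in> S" using cl s by simp
    have 2: "(c,d,e,a,b) \<in> S" using cl[OF 1] .
    have 3: "(d,e,a,b,c) \<in> S" using cl[OF 2] .
    have 4: "(e,a,b,c,d) \<in> S" using cl[OF 3] .
    have "a \<noteq> b" "b \<noteq> c" "c \<noteq> d" "d \<noteq> e" "e \<noteq> a" using ne s 1 2 3 4 by blast+
    then show ?thesis using t by auto
  qed
  let ?C = "orb ` S"
  have U: "\<Union>?C = S" using sub orb_self by blast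
  have "5 * card ?C = card (\<Union>?C)"
  proof (rule card_partition)
    show "finite ?C" using fin by simp
    show "finite (\<Union>?C)" using U fin by simp
    show "\<And>c. c \<in> ?C \<Longrightarrow> card c = 5" using c5 by blast
    show "\<And>c1 c2. c1 \<in> ?C \<Longrightarrow> c2 \<in> ?C \<Longrightarrow> c1 \<noteq> c2 \<Longrightarrow> c1 \<inter> c2 = {}"
    proof -
      fix c1 c2 assume "c1 \<in> ?C" "c2 \<in> ?C" "c1 \<noteq> c2"
      then obtain s t where st: "c1 = orb s" "c2 = orb t" by blast
      show "c1 \<inter> c2 = {}"
      proof (rule ccontr)
        assume "c1 \<inter> c2 \<noteq> {}"
        then obtain x where "x \<in> orb s" "x \<in> orb t" using st by blast
        then have "orb s = orb t" using orb_mem by metis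
        then show False using st \<open>c1 \<noteq> c2\<close> by simp
      qed
    qed
  qed
  then show ?thesis using U by (metis dvd_triv_left)
qed

context G21 begin

lemma bb0_terms: assumes v: "v \<in> VV" and b0: "bb v = 0" and u: "u \<in> BB v"
  shows "dg u + dg v - cg u v = 12"
proof -
  have finBB: "finite (BB v)" by (simp add: BB_def)
  have "(\<Sum>x\<in>BB v. dg x + dg v - cg x v - 12) = 0" using bb_BB b0 by simp
  moreover have nn: "\<And>x. x \<in> BB v \<Longrightarrow> dg x + dg v - cg x v - 12 \<ge> 0" using bb_term_nonneg v by (auto simp: BB_def)
  ultimately have "\<forall>x\<in>BB v. dg x + dg v - cg x v - 12 = 0" using sum_nonneg_eq_0_iff[OF finBB nn] by simp
  then show ?thesis using u by auto
qed

lemma all8: "\<forall>v\<in>VV. dg v = 8"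
proof
  fix v assume v: "v \<in> VV"
  show "dg v = 8"
  proof (rule ccontr)
    assume "dg v \<noteq> 8"
    then have d10: "dg v = 10" using reduce v by blast
    have r0: "rr v = 0" and b0: "bb v = 0" using reduce v by auto
    have "card (ZZ v) = 0" using rr_card[OF v] r0 by simp
    then have Z0: "ZZ v = {}" by (simp add: ZZ_def)
    have cM: "card (MM v) = 10" using card_NN_split[OF v] d10 Z0 by (simp add: dg_def)
    have "int (card (BB v)) = 10" using cardBB[OF v] d10 by simp
    then have "BB v \<noteq> {}" by auto
    then obtain u where uB: "u \<in> BB v" by blast
    have uV: "u \<in> VV" "u \<noteq> v" using uB by (auto simp: BB_def)
    have finBB: "finite (BB v)" by (simp add: BB_def)
    have e: "dg u = cg u v + 2" using bb0_terms[OF v b0 uB] d10 by simp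
    have "cg u v = int (card (NN u \<inter> MM v))" using cg_decomp[OF v, of u] Z0 by simp
    moreover have "2 * card (NN u \<inter> MM v) \<le> 10" using pairing[OF v uV] cM by simp
    ultimately have "dg u \<le> 7" using e by linarith
    moreover have "dg u = 8 \<or> dg u = 10" using reduce uV by blast
    ultimately show False by auto
  qed
qed

lemma cg_val: assumes x: "x \<in> VV" and y: "y \<in> VV"
  shows "cg x y = (if x = y then 8 else if R x y then 1 else 4)"
proof -
  have r0: "rr y = 0" and b0: "bb y = 0" using reduce y by auto
  have "card (ZZ y) = 0" using rr_card[OF y] r0 by simp
  then have Z0: "ZZ y = {}" by (simp add: ZZ_def)
  show ?thesis
  proof (cases "x = y")
    case True then show ?thesis using cg_diag all8 y by simp
  next
    case False
    show ?thesis
    proof (cases "R x y")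
      case True
      then have "x \<in> NN y" using x symR by (simp add: NN_def)
      then have "x \<in> MM y" using NN_split[OF y] Z0 by simp
      then show ?thesis using True False by (simp add: MM_def)
    next
      case nR: False
      have finBB: "finite (BB y)" by (simp add: BB_def)
      have "x \<in> BB y" using x False nR symR by (auto simp: BB_def)
      then have "dg x + dg y - cg x y = 12" using bb0_terms[OF y b0] by blast
      then show ?thesis using all8 x y False nR by simp
    qed
  qed
qed

end

context G21 begin

lemma cg_form: "x \<in> VV \<Longrightarrow> y \<in> VV \<Longrightarrow> cg x y = 4 + 4 * (if x = y then 1 else 0) - 3 * ai x y"
  using cg_val[of x y] by (auto simp: ai_def irrR)

lemma step1: assumes c: "c \<in> VV" and a: "a \<in> VV"
  shows "(\<Sum>d\<in>VV. ai c d * cg d a) = 20 + 13 * ai c a - 12 * (if c = a then 1 else 0)"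
proof -
  have "(\<Sum>d\<in>VV. ai c d * cg d a) = (\<Sum>d\<in>VV. 4 * ai c d + 4 * (if d = a then ai c d else 0) - 3 * (ai c d * ai a d))"
    by (rule sum.cong) (auto simp: cg_form a ai_sym[of _ a] algebra_simps)
  also have "\<dots> = 4 * dg c + 4 * ai c a - 3 * cg c a"
    using a by (simp add: sum_subtractf sum.distrib sum_distrib_left[symmetric] dg_sum cg_sum)
  finally show ?thesis using all8 c cg_form[OF c a] by simp
qed

lemma step2: assumes a: "a \<in> VV"
  shows "(\<Sum>c\<in>VV. cg a c * (\<Sum>d\<in>VV. ai c d * cg d a)) = 1288"
proof -
  have "(\<Sum>c\<in>VV. cg a c * (\<Sum>d\<in>VV. ai c d * cg d a)) = (\<Sum>c\<in>VV. 80 - 16 * (if c = a then 1 else 0) - 47 * ai a c)"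
  proof (rule sum.cong[OF refl])
    fix c assume c: "c \<in> VV"
    show "cg a c * (\<Sum>d\<in>VV. ai c d * cg d a) = 80 - 16 * (if c = a then 1 else 0) - 47 * ai a c"
      unfolding step1[OF c a] using cg_val[OF a c] by (auto simp: ai_def irrR dest: symR)
  qed
  also have "\<dots> = 80 * 21 - 16 - 47 * 8"
    using a all8 by (simp add: sum_subtractf sum_distrib_left[symmetric] dg_sum[symmetric] cardVV)
  finally show ?thesis by simp
qed

lemma W5_val: "(\<Sum>a\<in>VV. \<Sum>c\<in>VV. cg a c * (\<Sum>d\<in>VV. ai c d * cg d a)) = 27048"
proof -
  have "(\<Sum>a\<in>VV. \<Sum>c\<in>VV. cg a c * (\<Sum>d\<in>VV. ai c d * cg d a)) = (\<Sum>a\<in>VV. 1288)"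
    by (rule sum.cong) (simp_all add: step2)
  then show ?thesis by (simp add: cardVV)
qed

lemma W5_expand: "(\<Sum>a\<in>VV. \<Sum>c\<in>VV. cg a c * (\<Sum>d\<in>VV. ai c d * cg d a)) =
   (\<Sum>a\<in>VV. \<Sum>c\<in>VV. \<Sum>b\<in>VV. \<Sum>d\<in>VV. \<Sum>e\<in>VV. ai a b * ai b c * ai c d * ai d e * ai e a)"
proof (rule sum.cong[OF refl], rule sum.cong[OF refl])
  fix a c
  have e1: "cg a c = (\<Sum>b\<in>VV. ai a b * ai b c)" by (simp add: cg_sum ai_sym[of c])
  have e2: "(\<Sum>d\<in>VV. ai c d * cg d a) = (\<Sum>d\<in>VV. \<Sum>e\<in>VV. ai c d * ai d e * ai e a)"
    by (simp add: cg_sum ai_sym[of a] sum_distrib_left mult.assoc)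
  show "cg a c * (\<Sum>d\<in>VV. ai c d * cg d a) =
       (\<Sum>b\<in>VV. \<Sum>d\<in>VV. \<Sum>e\<in>VV. ai a b * ai b c * ai c d * ai d e * ai e a)"
    unfolding e1 e2 sum_distrib_right unfolding sum_distrib_left by (simp only: mult.assoc)
qed

definition SS where "SS = {t \<in> VV \<times> VV \<times> VV \<times> VV \<times> VV.
   case t of (a,b,c,d,e) \<Rightarrow> R a b \<and> R b c \<and> R c d \<and> R d e \<and> R e a}"

lemma ai5: "(if R a b \<and> R b c \<and> R c d \<and> R d e \<and> R e a then 1 else 0) = ai a b * ai b c * ai c d * ai d e * ai e a"
  by (auto simp: ai_def)

lemma card_SS: "int (card SS) = (\<Sum>a\<in>VV. \<Sum>b\<in>VV. \<Sum>c\<in>VV. \<Sum>d\<in>VV. \<Sum>e\<in>VV. ai a b * ai b c * ai c d * ai d e * ai e a)"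
proof -
  have "int (card SS) = (\<Sum>t\<in>VV \<times> VV \<times> VV \<times> VV \<times> VV.
     if (case t of (a,b,c,d,e) \<Rightarrow> R a b \<and> R b c \<and> R c d \<and> R d e \<and> R e a) then 1 else 0)"
    unfolding SS_def by (rule card_filter_int) simp
  also have "\<dots> = (\<Sum>a\<in>VV. \<Sum>b\<in>VV. \<Sum>c\<in>VV. \<Sum>d\<in>VV. \<Sum>e\<in>VV.
       if R a b \<and> R b c \<and> R c d \<and> R d e \<and> R e a then 1 else 0)"
    by (simp add: sum.cartesian_product split_def)
  also have "\<dots> = (\<Sum>a\<in>VV. \<Sum>b\<in>VV. \<Sum>c\<in>VV. \<Sum>d\<in>VV. \<Sum>e\<in>VV. ai a b * ai b c * ai c d * ai d e * ai e a)"
    by (simp only: ai5)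
  finally show ?thesis .
qed

lemma G21_False: False
proof -
  have "(\<Sum>a\<in>VV. \<Sum>c\<in>VV. \<Sum>b\<in>VV. \<Sum>d\<in>VV. \<Sum>e\<in>VV. ai a b * ai b c * ai c d * ai d e * ai e a)
      = (\<Sum>a\<in>VV. \<Sum>b\<in>VV. \<Sum>c\<in>VV. \<Sum>d\<in>VV. \<Sum>e\<in>VV. ai a b * ai b c * ai c d * ai d e * ai e a)"
    by (rule sum.cong[OF refl], rule sum.swap)
  then have c: "int (card SS) = 27048" using W5_val W5_expand card_SS by simp
  have "5 dvd card SS"
  proof (rule rot5_dvd)
    show "finite SS" unfolding SS_def by (rule finite_subset[of _ "VV \<times> VV \<times> VV \<times> VV \<times> VV"]) auto
    show "\<And>a b c d e. (a, b, c, d, e) \<in> SS \<Longrightarrow> (b, c, d, e, a) \<in> SS" by (auto simp: SS_def)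
    show "\<And>a b c d e. (a, b, c, d, e) \<in> SS \<Longrightarrow> a \<noteq> b" using irrR by (auto simp: SS_def)
  qed
  moreover have "card SS = 27048" using c by simp
  ultimately show False by simp
qed

end

definition adj20 :: "nat list list" where
"adj20 = [[4,6,8,9,10,12,14,19],[2,4,5,8,11,12,14],[1,6,7,9,10,12,16,17],[4,7,9,11,12,14,17,18],[0,1,3,5,7,10,15,16],[1,4,6,9,13,17,18,19],[0,2,5,7,11,14,15,18],[2,3,4,6,8,13,19],[0,1,7,9,15,17,18],[0,2,3,5,8,11,13,16],[0,2,4,11,13,17,18],[1,3,6,9,10,15,19],[0,1,2,3,13,15,18,19],[5,7,9,10,12,14,15],[0,1,3,6,13,16,17],[4,6,8,11,12,13,16,17],[2,4,9,14,15,18,19],[2,3,5,8,10,14,15,19],[3,5,6,8,10,12,16],[0,5,7,11,12,16,17]]"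

definition rb :: "nat \<Rightarrow> nat \<Rightarrow> bool" where
 "rb u v = (u < 20 \<and> v \<in> set (adj20 ! u))"

definition chk2 :: bool where
 "chk2 = (length adj20 = 20 \<and>
   list_all (\<lambda>(u,Nu). distinct Nu \<and> u \<notin> set Nu \<and> list_all (\<lambda>w. w < 20) Nu) (zip [0..<20] adj20) \<and>
   list_all (\<lambda>(u,Nu). list_all (\<lambda>(v,Nv).
      let c = length (filter (\<lambda>w. w \<in> set Nv) Nu) in
      (v \<in> set Nu \<longrightarrow> c \<le> 1) \<and> (u \<noteq> v \<and> v \<notin> set Nu \<longrightarrow> 11 \<le> length Nu + length Nv - c)
      \<and> (v \<in> set Nu \<longleftrightarrow> u \<in> set Nv)) (zip [0..<20] adj20)) (zip [0..<20] adj20))"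

lemma chk2_ok: chk2 by code_simp


lemma img_lt: "f ` A \<subseteq> {0..<N} \<Longrightarrow> x \<in> A \<Longrightarrow> f x < N" by auto

lemma book2_copy:
  assumes "u < N" "v < N" "a < N" "b < N" "u \<noteq> v" "a \<noteq> b" "a \<noteq> u" "a \<noteq> v" "b \<noteq> u" "b \<noteq> v"
    "col {u,v}" "col {u,a}" "col {v,a}" "col {u,b}" "col {v,b}"
  shows "has_copy (book 2) N col"
proof -
  define f where "f i = (if i = 0 then u else if i = 1 then v else if i = 2 then a else b)" for i :: nat
  have V: "fst (book 2) = {0..<4}" by (simp add: book_def)
  have V4: "{0..<4::nat} = {0,1,2,3}" by auto
  show ?thesis unfolding has_copy_def
  proof (intro exI conjI)
    show "inj_on f (fst (book 2))" unfolding V V4 using assms by (auto simp: f_def inj_on_def)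
    show "f ` fst (book 2) \<subseteq> {0..<N}" unfolding V V4 using assms by (auto simp: f_def)
    show "\<forall>e\<in>snd (book 2). col (f ` e)"
    proof
      fix e assume "e \<in> snd (book 2)"
      then have "e = {0,1} \<or> (\<exists>i. e = {0,i} \<and> 2 \<le> i \<and> i < 4) \<or> (\<exists>i. e = {1,i} \<and> 2 \<le> i \<and> i < 4)"
        by (simp add: book_def)
      moreover have i23: "\<And>i::nat. 2 \<le> i \<Longrightarrow> i < 4 \<Longrightarrow> i = 2 \<or> i = 3" by arith
      ultimately show "col (f ` e)"
      proof (elim disjE exE conjE)
        assume "e = {0,1}" then show ?thesis using assms by (simp add: f_def insert_commute)
      next
        fix i assume "e = {0,i}" "2 \<le> i" "i < 4"
        then show ?thesis using i23[of i] assms by (auto simp: f_def insert_commute)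
      next
        fix i assume "e = {1,i}" "2 \<le> i" "i < 4"
        then show ?thesis using i23[of i] assms by (auto simp: f_def insert_commute)
      qed
    qed
  qed
qed

lemma book8_copy:
  assumes "u < N" "v < N" "u \<noteq> v" "\<not> col {u,v}"
    and T: "T \<subseteq> {w. w < N \<and> w \<noteq> u \<and> w \<noteq> v \<and> \<not> col {u,w} \<and> \<not> col {v,w}}" "card T = 8"
  shows "has_copy (book 8) N (\<lambda>e. \<not> col e)"
proof -
  have fT: "finite T" using T(2) by (metis card.infinite zero_neq_numeral)
  obtain g where g: "bij_betw g {2..<10::nat} T"
    using finite_same_card_bij[of "{2..<10::nat}" T] fT T(2) by auto
  define f where "f i = (if i = 0 then u else if i = 1 then v else g i)" for i :: nat
  have gT: "\<And>i. 2 \<le> i \<Longrightarrow> i < 10 \<Longrightarrow> g i \<in> T" using g by (auto simp: bij_betw_def)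
  have gN: "\<And>i. 2 \<le> i \<Longrightarrow> i < 10 \<Longrightarrow> g i < N \<and> g i \<noteq> u \<and> g i \<noteq> v \<and> \<not> col {u, g i} \<and> \<not> col {v, g i}"
    using gT T(1) by blast
  have ginj: "inj_on g {2..<10}" using g by (auto simp: bij_betw_def)
  have V: "fst (book 8) = {0..<10}" by (simp add: book_def)
  have cases3: "\<And>i::nat. i = 0 \<or> i = 1 \<or> 2 \<le> i" by arith
  show ?thesis unfolding has_copy_def
  proof (intro exI conjI)
    show "inj_on f (fst (book 8))" unfolding V
    proof (rule inj_onI)
      fix i j assume ij: "i \<in> {0..<10::nat}" "j \<in> {0..<10::nat}" "f i = f j"
      show "i = j"
        using cases3[of i] cases3[of j]
      proof (elim disjE)
      qed (use ij gN assms(3) ginj in \<open>auto simp: f_def inj_on_def\<close>)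
    qed
    show "f ` fst (book 8) \<subseteq> {0..<N}" unfolding V
    proof
      fix x assume "x \<in> f ` {0..<10}"
      then obtain i where i: "i < 10" "x = f i" by auto
      show "x \<in> {0..<N}" using cases3[of i] i gN[of i] assms by (auto simp: f_def)
    qed
    show "\<forall>e\<in>snd (book 8). \<not> col (f ` e)"
    proof
      fix e assume "e \<in> snd (book 8)"
      then have "e = {0,1} \<or> (\<exists>i. e = {0,i} \<and> 2 \<le> i \<and> i < 10) \<or> (\<exists>i. e = {1,i} \<and> 2 \<le> i \<and> i < 10)"
        by (simp add: book_def)
      then show "\<not> col (f ` e)"
      proof (elim disjE exE conjE)
        assume "e = {0,1}" then show ?thesis using assms by (simp add: f_def insert_commute)
      next
        fix i assume "e = {0,i}" "2 \<le> i" "i < 10"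
        then show ?thesis using gN[of i] by (simp add: f_def insert_commute)
      next
        fix i assume "e = {1,i}" "2 \<le> i" "i < 10"
        then show ?thesis using gN[of i] by (simp add: f_def insert_commute)
      qed
    qed
  qed
qed

lemma upper: "ramsey_prop (book 2) (book 8) 21"
  unfolding ramsey_prop_def
proof (rule allI, rule ccontr)
  fix col :: "nat set \<Rightarrow> bool"
  assume "\<not> (has_copy (book 2) 21 col \<or> has_copy (book 8) 21 (\<lambda>e. \<not> col e))"
  then have n2: "\<not> has_copy (book 2) 21 col" and n8: "\<not> has_copy (book 8) 21 (\<lambda>e. \<not> col e)" by auto
  define R where "R u v = (u \<noteq> v \<and> col {u,v})" for u v
  have "G21 R"
  proof
    show "\<And>u v. R u v \<Longrightarrow> R v u" by (auto simp: R_def insert_commute)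
    show "\<And>v. \<not> R v v" by (simp add: R_def)
    show "card {w\<in>VV. R u w \<and> R v w} \<le> 1" if uv: "u \<in> VV" "v \<in> VV" "R u v" for u v
    proof (rule ccontr)
      assume "\<not> ?thesis"
      then have "2 \<le> card {w\<in>VV. R u w \<and> R v w}" by simp
      then obtain S where S: "S \<subseteq> {w\<in>VV. R u w \<and> R v w}" "card S = 2"
        by (meson obtain_subset_with_card_n)
      then obtain a b where ab: "S = {a,b}" "a \<noteq> b" by (auto simp: card_2_iff)
      have "has_copy (book 2) 21 col"
        using S ab uv by (intro book2_copy[of u _ v a b]) (auto simp: R_def VV_def insert_commute)
      with n2 show False by simp
    qed
    show "card {w\<in>VV. w\<noteq>u \<and> w\<noteq>v \<and> \<not>R u w \<and> \<not>R v w} \<le> 7"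
      if uv: "u \<in> VV" "v \<in> VV" "u \<noteq> v" "\<not> R u v" for u v
    proof (rule ccontr)
      assume "\<not> ?thesis"
      then have "8 \<le> card {w\<in>VV. w\<noteq>u \<and> w\<noteq>v \<and> \<not>R u w \<and> \<not>R v w}" by simp
      then obtain T where T: "T \<subseteq> {w\<in>VV. w\<noteq>u \<and> w\<noteq>v \<and> \<not>R u w \<and> \<not>R v w}" "card T = 8"
        by (meson obtain_subset_with_card_n)
      have "has_copy (book 8) 21 (\<lambda>e. \<not> col e)"
        using T uv by (intro book8_copy[of u _ v _ T]) (auto simp: R_def VV_def)
      with n8 show False by simp
    qed
  qed
  then show False by (rule G21.G21_False)
qed


lemma chk2_facts:
  assumes u: "u < 20" and v: "v < 20"
  shows "distinct (adj20 ! u)" "u \<notin> set (adj20 ! u)" "\<forall>w\<in>set (adj20 ! u). w < 20"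
    "v \<in> set (adj20 ! u) \<Longrightarrow> length (filter (\<lambda>w. w \<in> set (adj20 ! v)) (adj20 ! u)) \<le> 1"
    "u \<noteq> v \<Longrightarrow> v \<notin> set (adj20 ! u) \<Longrightarrow>
       11 \<le> length (adj20 ! u) + length (adj20 ! v) - length (filter (\<lambda>w. w \<in> set (adj20 ! v)) (adj20 ! u))"
    "v \<in> set (adj20 ! u) \<longleftrightarrow> u \<in> set (adj20 ! v)"
proof -
  have c: "chk2" by (rule chk2_ok)
  have len: "length adj20 = 20" using c by (simp add: chk2_def)
  have mem: "(x, adj20 ! x) \<in> set (zip [0..<20] adj20)" if "x < 20" for x
  proof -
    have "\<exists>i. (x, adj20 ! x) = ([0..<20] ! i, adj20 ! i) \<and> i < min (length [0..<20]) (length adj20)"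
      using that len by (intro exI[of _ x]) simp
    then show ?thesis by (simp add: set_zip)
  qed
  have A: "\<forall>p\<in>set (zip [0..<20] adj20). (case p of (u,Nu) \<Rightarrow> distinct Nu \<and> u \<notin> set Nu \<and> list_all (\<lambda>w. w < 20) Nu)"
    using c by (simp add: chk2_def list_all_iff)
  have B: "\<forall>p\<in>set (zip [0..<20] adj20). \<forall>q\<in>set (zip [0..<20] adj20). (case p of (u,Nu) \<Rightarrow> case q of (v,Nv) \<Rightarrow>
      let c = length (filter (\<lambda>w. w \<in> set Nv) Nu) in
      (v \<in> set Nu \<longrightarrow> c \<le> 1) \<and> (u \<noteq> v \<and> v \<notin> set Nu \<longrightarrow> 11 \<le> length Nu + length Nv - c)
      \<and> (v \<in> set Nu \<longleftrightarrow> u \<in> set Nv))"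
    using c unfolding chk2_def list_all_iff by blast
  from A mem[OF u] show "distinct (adj20 ! u)" "u \<notin> set (adj20 ! u)" "\<forall>w\<in>set (adj20 ! u). w < 20"
    by (auto simp: list_all_iff)
  from B mem[OF u] mem[OF v] have b: "let c = length (filter (\<lambda>w. w \<in> set (adj20 ! v)) (adj20 ! u)) in
      (v \<in> set (adj20 ! u) \<longrightarrow> c \<le> 1) \<and> (u \<noteq> v \<and> v \<notin> set (adj20 ! u) \<longrightarrow> 11 \<le> length (adj20 ! u) + length (adj20 ! v) - c)
      \<and> (v \<in> set (adj20 ! u) \<longleftrightarrow> u \<in> set (adj20 ! v))" by fastforce
  then show "v \<in> set (adj20 ! u) \<Longrightarrow> length (filter (\<lambda>w. w \<in> set (adj20 ! v)) (adj20 ! u)) \<le> 1"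
    "u \<noteq> v \<Longrightarrow> v \<notin> set (adj20 ! u) \<Longrightarrow>
       11 \<le> length (adj20 ! u) + length (adj20 ! v) - length (filter (\<lambda>w. w \<in> set (adj20 ! v)) (adj20 ! u))"
    "v \<in> set (adj20 ! u) \<longleftrightarrow> u \<in> set (adj20 ! v)"
    by (simp_all add: Let_def)
qed

lemma rb_sym: "rb u v \<Longrightarrow> rb v u"
proof -
  assume r: "rb u v"
  then have u: "u < 20" and m: "v \<in> set (adj20 ! u)" by (auto simp: rb_def)
  then have v: "v < 20" using chk2_facts(3)[OF u u] by blast
  show ?thesis using chk2_facts(6)[OF u v] m v by (simp add: rb_def)
qed

definition col0 :: "nat set \<Rightarrow> bool" where "col0 e = (\<exists>a b. e = {a,b} \<and> rb a b)"

lemma rb_comm: "rb x y = rb y x" using rb_sym by blast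

lemma col0_iff: "col0 {x,y} = rb x y"
  unfolding col0_def by (auto simp: doubleton_eq_iff intro: rb_sym)

lemma lower: "\<not> ramsey_prop (book 2) (book 8) 20"
  unfolding ramsey_prop_def
proof
  assume "\<forall>col. has_copy (book 2) 20 col \<or> has_copy (book 8) 20 (\<lambda>e. \<not> col e)"
  then have "has_copy (book 2) 20 col0 \<or> has_copy (book 8) 20 (\<lambda>e. \<not> col0 e)" by blast
  then show False
  proof
    assume "has_copy (book 2) 20 col0"
    then obtain f where f: "inj_on f {0..<4}" "f ` {0..<4} \<subseteq> {0..<20}"
        "\<forall>e\<in>snd (book 2). col0 (f ` e)"
      by (auto simp: has_copy_def book_def)
    have E: "{0,1} \<in> snd (book 2)" "{0,2} \<in> snd (book 2)" "{0,3} \<in> snd (book 2)"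
         "{1,2} \<in> snd (book 2)" "{1,3} \<in> snd (book 2)" by (auto simp: book_def)
    have r: "rb (f 0) (f 1)" "rb (f 0) (f 2)" "rb (f 1) (f 2)" "rb (f 0) (f 3)" "rb (f 1) (f 3)"
      using f(3) E by (auto simp: col0_iff)
    have lt: "f 0 < 20" "f 1 < 20" using img_lt[OF f(2)] by auto
    have d: "f 2 \<noteq> f 3" using inj_onD[OF f(1), of 2 3] by auto
    have sub: "{f 2, f 3} \<subseteq> set (filter (\<lambda>w. w \<in> set (adj20 ! (f 1))) (adj20 ! (f 0)))"
      using r by (auto simp: rb_def)
    have "card {f 2, f 3} \<le> card (set (filter (\<lambda>w. w \<in> set (adj20 ! (f 1))) (adj20 ! (f 0))))"
      by (rule card_mono[OF _ sub]) simp
    also have "\<dots> \<le> length (filter (\<lambda>w. w \<in> set (adj20 ! (f 1))) (adj20 ! (f 0)))" by (rule card_length)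
    finally show False using chk2_facts(4)[OF lt] r(1) d by (simp add: rb_def)
  next
    assume "has_copy (book 8) 20 (\<lambda>e. \<not> col0 e)"
    then obtain f where f: "inj_on f {0..<10}" "f ` {0..<10} \<subseteq> {0..<20}"
        "\<forall>e\<in>snd (book 8). \<not> col0 (f ` e)"
      by (auto simp: has_copy_def book_def)
    define u where "u = f 0"
    define v where "v = f 1"
    have lt: "u < 20" "v < 20" using img_lt[OF f(2)] by (auto simp: u_def v_def)
    have uv: "u \<noteq> v" using inj_onD[OF f(1), of 0 1] by (auto simp: u_def v_def)
    have nr: "\<not> rb u v"
    proof -
      have "{0,1} \<in> snd (book 8)" by (simp add: book_def)
      then have "\<not> col0 (f ` {0,1})" using f(3) by auto
      then show ?thesis by (simp add: col0_iff u_def v_def)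
    qed
    have nr2: "\<not> rb u (f i) \<and> \<not> rb v (f i)" if i: "2 \<le> i" "i < 10" for i
    proof -
      have "{0,i} \<in> snd (book 8)" "{1,i} \<in> snd (book 8)" using i by (auto simp: book_def)
      then have "\<not> col0 (f ` {0,i})" "\<not> col0 (f ` {1,i})" using f(3) by auto
      then show ?thesis by (simp add: col0_iff u_def v_def)
    qed
    let ?Nu = "set (adj20 ! u)" and ?Nv = "set (adj20 ! v)"
    have vNu: "v \<notin> ?Nu" using nr lt by (simp add: rb_def)
    have uNv: "u \<notin> ?Nv" using vNu chk2_facts(6)[OF lt] by simp
    have T: "f ` {2..<10} \<subseteq> ({0..<20} - {u,v}) - (?Nu \<union> ?Nv)"
    proof
      fix x assume "x \<in> f ` {2..<10}"
      then obtain i where i: "2 \<le> i" "i < 10" "x = f i" by auto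
      have "f i \<noteq> u" "f i \<noteq> v" using inj_onD[OF f(1), of i 0] inj_onD[OF f(1), of i 1] i by (auto simp: u_def v_def)
      moreover have "f i < 20" using img_lt[OF f(2)] i by auto
      ultimately show "x \<in> ({0..<20} - {u,v}) - (?Nu \<union> ?Nv)"
        using i nr2[OF i(1,2)] lt by (auto simp: rb_def)
    qed
    have U: "?Nu \<union> ?Nv \<subseteq> {0..<20} - {u,v}"
      using chk2_facts(2,3)[OF lt(1) lt(1)] chk2_facts(2,3)[OF lt(2) lt(2)] vNu uNv by auto
    have c1: "card (({0..<20} - {u,v}) - (?Nu \<union> ?Nv)) = card ({0..<20::nat} - {u,v}) - card (?Nu \<union> ?Nv)"
      using U by (intro card_Diff_subset) (auto intro: finite_subset)
    have c2: "card ({0..<20::nat} - {u,v}) = 18" using lt uv by simp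
    have c3: "card (?Nu \<union> ?Nv) + card (?Nu \<inter> ?Nv) = card ?Nu + card ?Nv"
      using card_Un_Int[of ?Nu ?Nv] by simp
    have c4: "card ?Nu = length (adj20 ! u)" "card ?Nv = length (adj20 ! v)"
      using chk2_facts(1)[OF lt(1) lt(1)] chk2_facts(1)[OF lt(2) lt(2)] by (simp_all add: distinct_card)
    have c5: "card (?Nu \<inter> ?Nv) = length (filter (\<lambda>w. w \<in> ?Nv) (adj20 ! u))"
    proof -
      have "set (filter (\<lambda>w. w \<in> ?Nv) (adj20 ! u)) = ?Nu \<inter> ?Nv" by auto
      moreover have "distinct (filter (\<lambda>w. w \<in> ?Nv) (adj20 ! u))"
        using chk2_facts(1)[OF lt(1) lt(1)] by simp
      ultimately show ?thesis by (metis distinct_card)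
    qed
    have c6: "card (f ` {2..<10}) = 8"
      using f(1) by (subst card_image) (auto simp: inj_on_def)
    have c7: "card (f ` {2..<10}) \<le> card (({0..<20} - {u,v}) - (?Nu \<union> ?Nv))"
      by (rule card_mono[OF _ T]) simp
    have c8: "card (?Nu \<union> ?Nv) \<le> 18" using card_mono[OF _ U] c2 by simp
    have "11 \<le> length (adj20 ! u) + length (adj20 ! v) - length (filter (\<lambda>w. w \<in> ?Nv) (adj20 ! u))"
      using chk2_facts(5)[OF lt uv vNu] .
    then show False using c1 c2 c3 c4 c5 c6 c7 c8 by linarith
  qed
qed

lemma mono_copy: assumes "has_copy G N col" "N \<le> M" shows "has_copy G M col"
proof -
  obtain f where f: "inj_on f (fst G)" "f ` fst G \<subseteq> {0..<N}" "\<forall>e\<in>snd G. col (f ` e)"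
    using assms(1) by (auto simp: has_copy_def)
  have "f ` fst G \<subseteq> {0..<M}" using f(2) assms(2) by auto
  then show ?thesis using f by (auto simp: has_copy_def)
qed

lemma mono_rp: "ramsey_prop G H N \<Longrightarrow> N \<le> M \<Longrightarrow> ramsey_prop G H M"
  unfolding ramsey_prop_def using mono_copy by blast

theorem mainTheorem4:
  shows "ramsey_number (book 2) (book 8) = 21"
  unfolding ramsey_number_def
proof (rule Least_equality)
  show "ramsey_prop (book 2) (book 8) 21" by (rule upper)
  show "\<And>y. ramsey_prop (book 2) (book 8) y \<Longrightarrow> 21 \<le> y"
  proof (rule ccontr)
    fix y assume "ramsey_prop (book 2) (book 8) y" "\<not> 21 \<le> y"
    then have "ramsey_prop (book 2) (book 8) 20" using mono_rp by fastforce
    with lower show False by simp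
  qed
qed


end
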